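(* For every finite partial IP loop $P$ there exists a finite partial IP loop $Q$ with $P\le Q$ and $3\mid o_3(Q)$.
   Context: A partial IP loop is a set $P$ with a partial binary operation $(x,y)\mapsto xy$ defined on a subset $D(P)\subseteq P\times P$ (the domain) such that: (1) there is $1\in P$ with $(1,x),(x,1)\in D(P)$ and $1x=x1=x$ for all $x\in P$; (2) for each $x\in P$ there is a unique $y\in P$, denoted $x^{-1}$, with $(x,y),(y,x)\in D(P)$ and $xy=yx=1$; (3) whenever $(x,y)\in D(P)$, we have $(x^{-1},xy),(xy,y^{-1})\in D(P)$ and $x^{-1}(xy)=y$, $(xy)y^{-1}=x$. A partial IP loop $(Q,* )$ extends $(P,\cdot)$ (written $P\le Q$) if $P\subseteq Q$, $D(P)\subseteq D(Q)$ and $x\cdot y=x*y$ for all $(x,y)\in D(P)$. $O_3(P)=\{x\in P: (x,x)\in D(P),\ (x,xx)\in D(P),\ x\neq 1,\ x(xx)=1\}$ and $o_3(P)=\#O_3(P)$. *)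

theory Defs
  imports Main
begin

text \<open>A partial IP loop is given by a carrier S, a domain D \<subseteq> S \<times> S of the partial
operation, the operation f (only its values on D matter) and the identity e.\<close>

definition pinv :: "'a set \<Rightarrow> ('a \<times> 'a) set \<Rightarrow> ('a \<Rightarrow> 'a \<Rightarrow> 'a) \<Rightarrow> 'a \<Rightarrow> 'a \<Rightarrow> 'a" where
  "pinv S D f e x = (THE y. y \<in> S \<and> (x, y) \<in> D \<and> (y, x) \<in> D \<and> f x y = e \<and> f y x = e)"

definition partial_ip_loop :: "'a set \<Rightarrow> ('a \<times> 'a) set \<Rightarrow> ('a \<Rightarrow> 'a \<Rightarrow> 'a) \<Rightarrow> 'a \<Rightarrow> bool" where
  "partial_ip_loop S D f e \<longleftrightarrow>
     D \<subseteq> S \<times> S \<and> (\<forall>(x, y) \<in> D. f x y \<in> S) \<and>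
     e \<in> S \<and>
     (\<forall>x\<in>S. (e, x) \<in> D \<and> (x, e) \<in> D \<and> f e x = x \<and> f x e = x) \<and>
     (\<forall>x\<in>S. \<exists>!y. y \<in> S \<and> (x, y) \<in> D \<and> (y, x) \<in> D \<and> f x y = e \<and> f y x = e) \<and>
     (\<forall>(x, y) \<in> D.
        (pinv S D f e x, f x y) \<in> D \<and> (f x y, pinv S D f e y) \<in> D \<and>
        f (pinv S D f e x) (f x y) = y \<and> f (f x y) (pinv S D f e y) = x)"

definition pextends ::
  "'a set \<Rightarrow> ('a \<times> 'a) set \<Rightarrow> ('a \<Rightarrow> 'a \<Rightarrow> 'a) \<Rightarrow>
   'a set \<Rightarrow> ('a \<times> 'a) set \<Rightarrow> ('a \<Rightarrow> 'a \<Rightarrow> 'a) \<Rightarrow> bool" where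
  "pextends S D f S' D' f' \<longleftrightarrow> S \<subseteq> S' \<and> D \<subseteq> D' \<and> (\<forall>(x, y) \<in> D. f x y = f' x y)"

definition O3 :: "'a set \<Rightarrow> ('a \<times> 'a) set \<Rightarrow> ('a \<Rightarrow> 'a \<Rightarrow> 'a) \<Rightarrow> 'a \<Rightarrow> 'a set" where
  "O3 S D f e = {x \<in> S. (x, x) \<in> D \<and> (x, f x x) \<in> D \<and> x \<noteq> e \<and> f x (f x x) = e}"

definition o3 :: "'a set \<Rightarrow> ('a \<times> 'a) set \<Rightarrow> ('a \<Rightarrow> 'a \<Rightarrow> 'a) \<Rightarrow> 'a \<Rightarrow> nat" where
  "o3 S D f e = card (O3 S D f e)"

text \<open>Copy of a structure on 'a inside the type 'a + nat via Inl.\<close>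
definition lift_dom :: "('a \<times> 'a) set \<Rightarrow> (('a + 'b) \<times> ('a + 'b)) set" where
  "lift_dom D = (\<lambda>(x, y). (Inl x, Inl y)) ` D"

definition lift_op :: "('a \<Rightarrow> 'a \<Rightarrow> 'a) \<Rightarrow> ('a + 'b) \<Rightarrow> ('a + 'b) \<Rightarrow> ('a + 'b)" where
  "lift_op f a b = Inl (f (projl a) (projl b))"

end

theory Submission
  imports Defs
begin

lemma pinv_props:
  assumes "partial_ip_loop S D f e" "x \<in> S"
  shows "pinv S D f e x \<in> S \<and> (x, pinv S D f e x) \<in> D \<and> (pinv S D f e x, x) \<in> D
         \<and> f x (pinv S D f e x) = e \<and> f (pinv S D f e x) x = e"
proof -
  have "\<exists>!y. y \<in> S \<and> (x, y) \<in> D \<and> (y, x) \<in> D \<and> f x y = e \<and> f y x = e"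
    using assms unfolding partial_ip_loop_def by blast
  then show ?thesis unfolding pinv_def by (rule theI')
qed

lemma pinv_unique:
  assumes "partial_ip_loop S D f e" "x \<in> S" "y \<in> S" "(x, y) \<in> D" "(y, x) \<in> D" "f x y = e" "f y x = e"
  shows "pinv S D f e x = y"
proof -
  have "\<exists>!y. y \<in> S \<and> (x, y) \<in> D \<and> (y, x) \<in> D \<and> f x y = e \<and> f y x = e"
    using assms unfolding partial_ip_loop_def by blast
  then show ?thesis unfolding pinv_def using assms by (intro the1_equality) auto
qed

lemma pil_intro:
  assumes "D \<subseteq> S \<times> S" "\<forall>(x, y) \<in> D. f x y \<in> S" "e \<in> S"
    "\<forall>x\<in>S. (e, x) \<in> D \<and> (x, e) \<in> D \<and> f e x = x \<and> f x e = x"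
    and gS: "\<forall>x\<in>S. g x \<in> S \<and> (x, g x) \<in> D \<and> (g x, x) \<in> D \<and> f x (g x) = e \<and> f (g x) x = e"
    and gU: "\<forall>x\<in>S. \<forall>y\<in>S. (x, y) \<in> D \<and> (y, x) \<in> D \<and> f x y = e \<and> f y x = e \<longrightarrow> y = g x"
    and ax: "\<forall>(x, y) \<in> D.
        (g x, f x y) \<in> D \<and> (f x y, g y) \<in> D \<and>
        f (g x) (f x y) = y \<and> f (f x y) (g y) = x"
  shows "partial_ip_loop S D f e"
proof -
  have ex: "\<forall>x\<in>S. \<exists>!y. y \<in> S \<and> (x, y) \<in> D \<and> (y, x) \<in> D \<and> f x y = e \<and> f y x = e"
    using gS gU by metis
  have pg: "pinv S D f e x = g x" if "x \<in> S" for x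
    unfolding pinv_def using that gS gU by (intro the_equality) auto
  have *: "(pinv S D f e x, f x y) \<in> D \<and> (f x y, pinv S D f e y) \<in> D \<and>
        f (pinv S D f e x) (f x y) = y \<and> f (f x y) (pinv S D f e y) = x" if xy: "(x, y) \<in> D" for x y
  proof -
    have "x \<in> S" "y \<in> S" using assms(1) xy by auto
    then show ?thesis using ax xy pg by fastforce
  qed
  then have "\<forall>(x, y) \<in> D.
        (pinv S D f e x, f x y) \<in> D \<and> (f x y, pinv S D f e y) \<in> D \<and>
        f (pinv S D f e x) (f x y) = y \<and> f (f x y) (pinv S D f e y) = x"
    by auto
  then show ?thesis unfolding partial_ip_loop_def using assms ex by blast
qed

definition partner :: "nat \<Rightarrow> nat" where
  "partner j = (if even j then Suc j else j - 1)"

lemma partner_lt: "j < 2 * k \<Longrightarrow> partner j < 2 * k"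
  unfolding partner_def by auto

lemma partner_partner[simp]: "partner (partner j) = j"
  unfolding partner_def by auto

lemma partner_neq[simp]: "partner j \<noteq> j" "j \<noteq> partner j"
  unfolding partner_def by auto presburger+

fun gop :: "('a \<Rightarrow> 'a \<Rightarrow> 'a) \<Rightarrow> 'a \<Rightarrow> ('a + nat) \<Rightarrow> ('a + nat) \<Rightarrow> ('a + nat)" where
  "gop f e (Inl x) (Inl y) = Inl (f x y)"
| "gop f e (Inl x) (Inr j) = Inr j"
| "gop f e (Inr j) (Inl x) = Inr j"
| "gop f e (Inr i) (Inr j) = (if i = j then Inr (partner j) else Inl e)"

fun ginv :: "('a \<Rightarrow> 'a) \<Rightarrow> ('a + nat) \<Rightarrow> ('a + nat)" where
  "ginv i (Inl x) = Inl (i x)"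
| "ginv i (Inr j) = Inr (partner j)"

definition gdom :: "('a \<times> 'a) set \<Rightarrow> 'a \<Rightarrow> nat set \<Rightarrow> (('a + nat) \<times> ('a + nat)) set" where
  "gdom D e N = lift_dom D \<union> (\<lambda>j. (Inl e, Inr j)) ` N \<union> (\<lambda>j. (Inr j, Inl e)) ` N
     \<union> (\<lambda>j. (Inr j, Inr j)) ` N \<union> (\<lambda>j. (Inr j, Inr (partner j))) ` N"

lemma gdom_mem:
  "(a, b) \<in> gdom D e N \<longleftrightarrow>
    (\<exists>x y. a = Inl x \<and> b = Inl y \<and> (x, y) \<in> D) \<or>
    (\<exists>j\<in>N. (a = Inl e \<and> b = Inr j) \<or> (a = Inr j \<and> b = Inl e) \<or> (a = Inr j \<and> b = Inr j)
       \<or> (a = Inr j \<and> b = Inr (partner j)))"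
  unfolding gdom_def lift_dom_def by auto

lemma construction:
  assumes P: "partial_ip_loop S D f e"
  shows "partial_ip_loop (Inl ` S \<union> Inr ` {..<2*k}) (gdom D e {..<2*k}) (gop f e) (Inl e)"
proof -
  let ?i = "pinv S D f e"
  let ?N = "{..<2*k}"
  have DS: "D \<subseteq> S \<times> S" and cl: "\<forall>(x, y) \<in> D. f x y \<in> S" and eS: "e \<in> S"
    and idl: "\<forall>x\<in>S. (e, x) \<in> D \<and> (x, e) \<in> D \<and> f e x = x \<and> f x e = x"
    and ax: "\<forall>(x, y) \<in> D.
        (?i x, f x y) \<in> D \<and> (f x y, ?i y) \<in> D \<and>
        f (?i x) (f x y) = y \<and> f (f x y) (?i y) = x"
    using P unfolding partial_ip_loop_def by auto
  have ip: "\<And>x. x \<in> S \<Longrightarrow> ?i x \<in> S \<and> (x, ?i x) \<in> D \<and> (?i x, x) \<in> D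
         \<and> f x (?i x) = e \<and> f (?i x) x = e" using pinv_props[OF P] by blast
  have DS': "\<And>x y. (x, y) \<in> D \<Longrightarrow> x \<in> S \<and> y \<in> S" using DS by auto
  have cl': "\<And>x y. (x, y) \<in> D \<Longrightarrow> f x y \<in> S" using cl by auto
  have ie: "?i e = e" using pinv_unique[OF P eS eS] idl eS by auto
  have pN: "\<And>j. j \<in> ?N \<Longrightarrow> partner j \<in> ?N" using partner_lt by auto
  show ?thesis
  proof (rule pil_intro[where g = "ginv ?i"])
    show "gdom D e ?N \<subseteq> (Inl ` S \<union> Inr ` ?N) \<times> (Inl ` S \<union> Inr ` ?N)"
      using DS' eS pN by (auto simp: gdom_mem)
    show "\<forall>(x, y) \<in> gdom D e ?N. gop f e x y \<in> Inl ` S \<union> Inr ` ?N"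
      using cl' eS pN by (auto simp: gdom_mem)
    show "Inl e \<in> Inl ` S \<union> Inr ` ?N" using eS by auto
    show "\<forall>x\<in>Inl ` S \<union> Inr ` ?N. (Inl e, x) \<in> gdom D e ?N \<and> (x, Inl e) \<in> gdom D e ?N
           \<and> gop f e (Inl e) x = x \<and> gop f e x (Inl e) = x"
      using idl by (auto simp: gdom_mem)
    show "\<forall>x\<in>Inl ` S \<union> Inr ` ?N. ginv ?i x \<in> Inl ` S \<union> Inr ` ?N \<and> (x, ginv ?i x) \<in> gdom D e ?N
        \<and> (ginv ?i x, x) \<in> gdom D e ?N \<and> gop f e x (ginv ?i x) = Inl e \<and> gop f e (ginv ?i x) x = Inl e"
      using ip pN by (auto simp: gdom_mem)
    show "\<forall>x\<in>Inl ` S \<union> Inr ` ?N. \<forall>y\<in>Inl ` S \<union> Inr ` ?N. (x, y) \<in> gdom D e ?N \<and> (y, x) \<in> gdom D e ?N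
        \<and> gop f e x y = Inl e \<and> gop f e y x = Inl e \<longrightarrow> y = ginv ?i x"
    proof (intro ballI impI)
      fix x y assume x: "x \<in> Inl ` S \<union> Inr ` ?N" and y: "y \<in> Inl ` S \<union> Inr ` ?N"
        and h: "(x, y) \<in> gdom D e ?N \<and> (y, x) \<in> gdom D e ?N \<and> gop f e x y = Inl e \<and> gop f e y x = Inl e"
      show "y = ginv ?i x"
      proof (cases x)
        case (Inl a)
        with x have a: "a \<in> S" by auto
        show ?thesis
        proof (cases y)
          case (Inl b)
          with y have b: "b \<in> S" by auto
          have "(a, b) \<in> D" "(b, a) \<in> D" "f a b = e" "f b a = e"
            using h \<open>x = Inl a\<close> \<open>y = Inl b\<close> by (auto simp: gdom_mem)
          then have "?i a = b" using pinv_unique[OF P a b] by auto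
          then show ?thesis using \<open>x = Inl a\<close> \<open>y = Inl b\<close> by simp
        next
          case (Inr j) then show ?thesis using h \<open>x = Inl a\<close> by auto
        qed
      next
        case (Inr j)
        then show ?thesis using h by (cases y) (auto simp: gdom_mem split: if_splits)
      qed
    qed
    show "\<forall>(x, y) \<in> gdom D e ?N.
        (ginv ?i x, gop f e x y) \<in> gdom D e ?N \<and> (gop f e x y, ginv ?i y) \<in> gdom D e ?N \<and>
        gop f e (ginv ?i x) (gop f e x y) = y \<and> gop f e (gop f e x y) (ginv ?i y) = x"
    proof (intro ballI, clarify)
      fix a b assume ab: "(a, b) \<in> gdom D e ?N"
      then consider (L) x y where "a = Inl x" "b = Inl y" "(x, y) \<in> D"
        | (A) j where "j \<in> ?N" "a = Inl e" "b = Inr j"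
        | (B) j where "j \<in> ?N" "a = Inr j" "b = Inl e"
        | (C) j where "j \<in> ?N" "a = Inr j" "b = Inr j"
        | (E) j where "j \<in> ?N" "a = Inr j" "b = Inr (partner j)"
        unfolding gdom_mem by blast
      then show "(ginv ?i a, gop f e a b) \<in> gdom D e ?N \<and> (gop f e a b, ginv ?i b) \<in> gdom D e ?N \<and>
        gop f e (ginv ?i a) (gop f e a b) = b \<and> gop f e (gop f e a b) (ginv ?i b) = a"
      proof cases
        case L then show ?thesis using ax by (auto simp: gdom_mem)
      next
        case A then show ?thesis using ie pN by (auto simp: gdom_mem)
      next
        case B then show ?thesis using ie pN by (auto simp: gdom_mem)
      next
        case C then show ?thesis using pN by (auto simp: gdom_mem)
      next
        case E then show ?thesis using ie pN by (auto simp: gdom_mem)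
      qed
    qed
  qed
qed

lemma O3_construction:
  assumes P: "partial_ip_loop S D f e"
  shows "O3 (Inl ` S \<union> Inr ` {..<2*k}) (gdom D e {..<2*k}) (gop f e) (Inl e)
       = Inl ` O3 S D f e \<union> Inr ` {..<2*k}"
proof -
  have pN: "\<And>j. j < 2*k \<Longrightarrow> partner j < 2*k" using partner_lt by auto
  have DS: "D \<subseteq> S \<times> S" using P unfolding partial_ip_loop_def by auto
  show ?thesis
    unfolding O3_def using pN DS
    by (auto simp: gdom_mem)
qed

theorem proposition1:
  fixes S :: "'a set" and D :: "('a \<times> 'a) set" and f :: "'a \<Rightarrow> 'a \<Rightarrow> 'a" and e :: 'a
  assumes "partial_ip_loop S D f e" and "finite S"
  shows "\<exists>(S' :: ('a + nat) set) D' f' e'.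
           partial_ip_loop S' D' f' e' \<and> finite S' \<and>
           pextends (Inl ` S) (lift_dom D) (lift_op f) S' D' f' \<and>
           3 dvd o3 S' D' f' e'"
proof -
  define k where "k = o3 S D f e mod 3"
  have fin: "finite (O3 S D f e)" using assms(2) unfolding O3_def by auto
  have "card (Inl ` O3 S D f e \<union> Inr ` {..<2*k} :: ('a + nat) set) = o3 S D f e + 2 * k"
    unfolding o3_def using fin
    by (subst card_Un_disjoint) (auto simp: card_image)
  then have c: "o3 (Inl ` S \<union> Inr ` {..<2*k}) (gdom D e {..<2*k}) (gop f e) (Inl e) = o3 S D f e + 2 * k"
    unfolding o3_def using O3_construction[OF assms(1)] by simp
  have "3 dvd o3 S D f e + 2 * k" unfolding k_def by presburger
  moreover have "pextends (Inl ` S) (lift_dom D) (lift_op f) (Inl ` S \<union> Inr ` {..<2*k}) (gdom D e {..<2*k}) (gop f e)"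
    unfolding pextends_def gdom_def lift_dom_def lift_op_def by auto
  ultimately show ?thesis using construction[OF assms(1)] c assms(2) by fastforce
qed

end
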